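(* Let $\kappa:G\to[1,\infty)$ and suppose $G$ is $\kappa$-decaying with decay constant $C$. Let $\psi:G\to\mathbb{C}$ satisfy $K:=\|\psi\kappa\|_\infty<\infty$. Then for every normalized 2-cocycle $\sigma$, $\psi\in MCF(G,\sigma)$ and $\|M_\psi\|\le CK$ (operator norm of $M_\psi$ on $C^*_r(G,\sigma)$).
   Context: $\sigma:G\times G\to\mathbb{T}$ is a normalized 2-cocycle ($\sigma(g,h)\sigma(gh,k)=\sigma(h,k)\sigma(g,hk)$, $\sigma(g,e)=\sigma(e,g)=1$); $\Lambda_\sigma(g)$ is the unitary on $\ell^2(G)$ with $(\Lambda_\sigma(g)\xi)(h)=\sigma(g,g^{-1}h)\xi(g^{-1}h)$, $\lambda=\Lambda_1$; $C^*_r(G,\sigma)$ is the operator-norm closure of $\mathrm{span}\,\Lambda_\sigma(G)$. $\mathcal{K}(G)$ = finitely supported functions; $\pi_\lambda(f)=\sum_g f(g)\lambda(g)$. For $\kappa:G\to[1,\infty)$, $\|\xi\|_{2,\kappa}=\|\xi\kappa\|_2$; $G$ is $\kappa$-decaying if $f\mapsto\pi_\lambda(f)$ is bounded from $(\mathcal{K}(G),\|\cdot\|_{2,\kappa})$ to $C^*_r(G,1)$ with operator norm, and the norm of this map is the $\kappa$-decay constant. For $x\in C^*_r(G,\sigma)$, $\widehat x=x\delta_e$. For $\varphi:G\to\mathbb{C}$, $M_\varphi$ is the linear map on $\mathrm{span}\,\Lambda_\sigma(G)$ with $M_\varphi(\Lambda_\sigma(g))=\varphi(g)\Lambda_\sigma(g)$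 (extended to $C^*_r(G,\sigma)$ when bounded). $MCF(G,\sigma)$ is the set of $\varphi$ such that $\sum_g\varphi(g)\widehat x(g)\Lambda_\sigma(g)$ converges in operator norm (as a net of finite partial sums) for every $x\in C^*_r(G,\sigma)$. *)

theory Defs
  imports "HOL-Analysis.Analysis"
begin

text \<open>The discrete group G is a type of class group_add, written additively:
  the product gh is g + h, the inverse is -g, the unit e is 0.
  Vectors of l2(G) are functions G -> complex; operators are maps on such functions,
  and only their behaviour on l2(G) matters.\<close>

type_synonym 'g vec = "'g \<Rightarrow> complex"
type_synonym 'g oper = "'g vec \<Rightarrow> 'g vec"

definition ell2 :: "'g vec set" where
  "ell2 = {\<xi>. (\<lambda>g. (cmod (\<xi> g))\<^sup>2) summable_on UNIV}"

definition norm2 :: "'g vec \<Rightarrow> real" where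
  "norm2 \<xi> = sqrt (\<Sum>\<^sub>\<infinity>g. (cmod (\<xi> g))\<^sup>2)"

definition op_bound :: "'g oper \<Rightarrow> real \<Rightarrow> bool" where
  "op_bound T c \<longleftrightarrow> (\<forall>\<xi>\<in>ell2. T \<xi> \<in> ell2 \<and> norm2 (T \<xi>) \<le> c * norm2 \<xi>)"

definition opnorm :: "'g oper \<Rightarrow> real" where
  "opnorm T = Inf {c. 0 \<le> c \<and> op_bound T c}"

definition op_diff :: "'g oper \<Rightarrow> 'g oper \<Rightarrow> 'g oper" where
  "op_diff A B = (\<lambda>\<xi> h. A \<xi> h - B \<xi> h)"

definition normalized_2cocycle :: "('g::group_add \<Rightarrow> 'g \<Rightarrow> complex) \<Rightarrow> bool" where
  "normalized_2cocycle \<sigma> \<longleftrightarrow>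
     (\<forall>g h. cmod (\<sigma> g h) = 1) \<and>
     (\<forall>g h k. \<sigma> g h * \<sigma> (g + h) k = \<sigma> h k * \<sigma> g (h + k)) \<and>
     (\<forall>g. \<sigma> g 0 = 1 \<and> \<sigma> 0 g = 1)"

definition Lam :: "('g::group_add \<Rightarrow> 'g \<Rightarrow> complex) \<Rightarrow> 'g \<Rightarrow> 'g oper" where
  "Lam \<sigma> g = (\<lambda>\<xi> h. \<sigma> g (-g + h) * \<xi> (-g + h))"

definition fin_supp :: "('g \<Rightarrow> complex) \<Rightarrow> bool" where
  "fin_supp f \<longleftrightarrow> finite {g. f g \<noteq> 0}"

definition Lam_comb :: "('g::group_add \<Rightarrow> 'g \<Rightarrow> complex) \<Rightarrow> ('g \<Rightarrow> complex) \<Rightarrow> 'g oper" where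
  "Lam_comb \<sigma> f = (\<lambda>\<xi> h. \<Sum>g\<in>{g. f g \<noteq> 0}. f g * Lam \<sigma> g \<xi> h)"

text \<open>C*_r(G,sigma): operator-norm closure of span Lambda_sigma(G).\<close>
definition Cred :: "('g::group_add \<Rightarrow> 'g \<Rightarrow> complex) \<Rightarrow> 'g oper set" where
  "Cred \<sigma> = {x. \<forall>\<epsilon>>0. \<exists>f. fin_supp f \<and> op_bound (op_diff x (Lam_comb \<sigma> f)) \<epsilon>}"

definition pi_lambda :: "('g::group_add \<Rightarrow> complex) \<Rightarrow> 'g oper" where
  "pi_lambda f = Lam_comb (\<lambda>_ _. 1) f"

definition norm2_kappa :: "('g \<Rightarrow> real) \<Rightarrow> ('g \<Rightarrow> complex) \<Rightarrow> real" where
  "norm2_kappa \<kappa> f = norm2 (\<lambda>g. f g * complex_of_real (\<kappa> g))"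

definition decay_bound :: "('g::group_add \<Rightarrow> real) \<Rightarrow> real \<Rightarrow> bool" where
  "decay_bound \<kappa> C \<longleftrightarrow> (\<forall>f. fin_supp f \<longrightarrow> opnorm (pi_lambda f) \<le> C * norm2_kappa \<kappa> f)"

definition kappa_decaying :: "('g::group_add \<Rightarrow> real) \<Rightarrow> bool" where
  "kappa_decaying \<kappa> \<longleftrightarrow> (\<exists>C. decay_bound \<kappa> C)"

definition decay_constant :: "('g::group_add \<Rightarrow> real) \<Rightarrow> real" where
  "decay_constant \<kappa> = Inf {C. 0 \<le> C \<and> decay_bound \<kappa> C}"

definition hat :: "'g::group_add oper \<Rightarrow> 'g \<Rightarrow> complex" where
  "hat x = x (\<lambda>h. if h = 0 then 1 else 0)"

definition mcf_partial :: "('g::group_add \<Rightarrow> 'g \<Rightarrow> complex) \<Rightarrow> ('g \<Rightarrow> complex) \<Rightarrow> 'g oper \<Rightarrow> 'g set \<Rightarrow> 'g oper" where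
  "mcf_partial \<sigma> \<phi> x F = (\<lambda>\<xi> h. \<Sum>g\<in>F. \<phi> g * hat x g * Lam \<sigma> g \<xi> h)"

definition mcf_converges_to :: "('g::group_add \<Rightarrow> 'g \<Rightarrow> complex) \<Rightarrow> ('g \<Rightarrow> complex) \<Rightarrow> 'g oper \<Rightarrow> 'g oper \<Rightarrow> bool" where
  "mcf_converges_to \<sigma> \<phi> x y \<longleftrightarrow>
     (\<forall>\<epsilon>>0. \<exists>F0. finite F0 \<and> (\<forall>F. finite F \<and> F0 \<subseteq> F \<longrightarrow> op_bound (op_diff (mcf_partial \<sigma> \<phi> x F) y) \<epsilon>))"

definition MCF :: "('g::group_add \<Rightarrow> 'g \<Rightarrow> complex) \<Rightarrow> ('g \<Rightarrow> complex) set" where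
  "MCF \<sigma> = {\<phi>. \<forall>x\<in>Cred \<sigma>. \<exists>y. mcf_converges_to \<sigma> \<phi> x y}"

definition Mmult :: "('g::group_add \<Rightarrow> 'g \<Rightarrow> complex) \<Rightarrow> ('g \<Rightarrow> complex) \<Rightarrow> 'g oper \<Rightarrow> 'g oper" where
  "Mmult \<sigma> \<phi> x = (SOME y. mcf_converges_to \<sigma> \<phi> x y)"

end

theory Submission
  imports Defs
begin

lemma ell2_fin:
  assumes "\<xi> \<in> ell2" "finite S"
  shows "(\<Sum>h\<in>S. (cmod (\<xi> h))\<^sup>2) \<le> (norm2 \<xi>)\<^sup>2"
proof -
  have s: "(\<lambda>g. (cmod (\<xi> g))\<^sup>2) summable_on UNIV" using assms(1) by (simp add: ell2_def)
  have "(norm2 \<xi>)\<^sup>2 = (\<Sum>\<^sub>\<infinity>g. (cmod (\<xi> g))\<^sup>2)"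
    unfolding norm2_def by (simp add: infsum_nonneg)
  moreover have "(\<Sum>h\<in>S. (cmod (\<xi> h))\<^sup>2) \<le> (\<Sum>\<^sub>\<infinity>g. (cmod (\<xi> g))\<^sup>2)"
    by (rule finite_sum_le_infsum[OF s assms(2)]) auto
  ultimately show ?thesis by simp
qed

lemma norm2_nonneg: "0 \<le> norm2 \<xi>"
  unfolding norm2_def by (simp add: infsum_nonneg)

lemma ell2_bound:
  assumes "0 \<le> B" "\<And>S. finite S \<Longrightarrow> (\<Sum>h\<in>S. (cmod (\<eta> h))\<^sup>2) \<le> B\<^sup>2"
  shows "\<eta> \<in> ell2 \<and> norm2 \<eta> \<le> B"
proof -
  have s: "(\<lambda>g. (cmod (\<eta> g))\<^sup>2) summable_on UNIV"
    apply (rule nonneg_bdd_above_summable_on)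
     apply simp
    using assms(2) by (auto intro!: bdd_aboveI[where M="B\<^sup>2"])
  have "(\<Sum>\<^sub>\<infinity>g. (cmod (\<eta> g))\<^sup>2) \<le> B\<^sup>2"
    by (rule infsum_le_finite_sums[OF s]) (use assms(2) in auto)
  hence "norm2 \<eta> \<le> sqrt (B\<^sup>2)" unfolding norm2_def by (rule real_sqrt_le_mono)
  with assms(1) s show ?thesis by (simp add: ell2_def)
qed

lemma cmod_le_norm2:
  assumes "\<xi> \<in> ell2" shows "cmod (\<xi> h) \<le> norm2 \<xi>"
proof -
  have "(cmod (\<xi> h))\<^sup>2 \<le> (norm2 \<xi>)\<^sup>2" using ell2_fin[OF assms, of "{h}"] by simp
  thus ?thesis using norm2_nonneg by (rule power2_le_imp_le)
qed

lemma ell2_tri: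
  assumes "\<xi> \<in> ell2" "\<zeta> \<in> ell2" "\<And>h. cmod (\<eta> h) \<le> cmod (\<xi> h) + cmod (\<zeta> h)"
  shows "\<eta> \<in> ell2 \<and> norm2 \<eta> \<le> norm2 \<xi> + norm2 \<zeta>"
proof (rule ell2_bound)
  show "0 \<le> norm2 \<xi> + norm2 \<zeta>" by (simp add: add_nonneg_nonneg norm2_nonneg)
  fix S :: "'a set" assume S: "finite S"
  have "(\<Sum>h\<in>S. (cmod (\<eta> h))\<^sup>2) \<le> (\<Sum>h\<in>S. (cmod (\<xi> h) + cmod (\<zeta> h))\<^sup>2)"
    by (rule sum_mono) (use assms(3) in \<open>auto intro: power_mono\<close>)
  also have "\<dots> = (L2_set (\<lambda>h. cmod (\<xi> h) + cmod (\<zeta> h)) S)\<^sup>2"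
    unfolding L2_set_def by (subst real_sqrt_pow2) (rule sum_nonneg, simp_all)
  also have "\<dots> \<le> (L2_set (\<lambda>h. cmod (\<xi> h)) S + L2_set (\<lambda>h. cmod (\<zeta> h)) S)\<^sup>2"
    by (rule power_mono[OF L2_set_triangle_ineq]) (rule L2_set_nonneg)
  also have "\<dots> \<le> (norm2 \<xi> + norm2 \<zeta>)\<^sup>2"
  proof -
    have a: "L2_set (\<lambda>h. cmod (\<xi> h)) S \<le> norm2 \<xi>"
      if "\<xi> \<in> ell2" for \<xi> :: "'a vec"
    proof -
      have "L2_set (\<lambda>h. cmod (\<xi> h)) S \<le> sqrt ((norm2 \<xi>)\<^sup>2)"
        unfolding L2_set_def using ell2_fin[OF that S] by (rule real_sqrt_le_mono)
      thus ?thesis by (simp add: norm2_nonneg)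
    qed
    show ?thesis
      by (rule power_mono) (use a assms(1,2) in \<open>auto intro: add_mono add_nonneg_nonneg L2_set_nonneg\<close>)
  qed
  finally show "(\<Sum>h\<in>S. (cmod (\<eta> h))\<^sup>2) \<le> (norm2 \<xi> + norm2 \<zeta>)\<^sup>2" .
qed

lemma zero_ell2: "(\<lambda>h::'a. 0::complex) \<in> ell2 \<and> norm2 (\<lambda>h::'a. 0::complex) = 0"
proof -
  have "(\<lambda>h::'a. 0::complex) \<in> ell2 \<and> norm2 (\<lambda>h::'a. 0::complex) \<le> 0" by (rule ell2_bound) auto
  thus ?thesis using norm2_nonneg[of "\<lambda>h::'a. 0::complex"] by linarith
qed

lemma ell2_dom:
  assumes "\<xi> \<in> ell2" "\<And>h. cmod (\<eta> h) \<le> cmod (\<xi> h)"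
  shows "\<eta> \<in> ell2 \<and> norm2 \<eta> \<le> norm2 \<xi>"
proof (rule ell2_bound[OF norm2_nonneg])
  fix S :: "'a set" assume S: "finite S"
  have "(\<Sum>h\<in>S. (cmod (\<eta> h))\<^sup>2) \<le> (\<Sum>h\<in>S. (cmod (\<xi> h))\<^sup>2)"
    by (rule sum_mono) (use assms(2) in \<open>auto intro: power_mono\<close>)
  also have "\<dots> \<le> (norm2 \<xi>)\<^sup>2" by (rule ell2_fin[OF assms(1) S])
  finally show "(\<Sum>h\<in>S. (cmod (\<eta> h))\<^sup>2) \<le> (norm2 \<xi>)\<^sup>2" .
qed

lemma ell2_scale:
  assumes "\<xi> \<in> ell2"
  shows "(\<lambda>h. c * \<xi> h) \<in> ell2 \<and> norm2 (\<lambda>h. c * \<xi> h) \<le> cmod c * norm2 \<xi>"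
proof (rule ell2_bound)
  show "0 \<le> cmod c * norm2 \<xi>" by (simp add: norm2_nonneg)
  fix S :: "'a set" assume S: "finite S"
  have "(\<Sum>h\<in>S. (cmod (c * \<xi> h))\<^sup>2) = (cmod c)\<^sup>2 * (\<Sum>h\<in>S. (cmod (\<xi> h))\<^sup>2)"
    by (simp add: norm_mult power_mult_distrib sum_distrib_left)
  also have "\<dots> \<le> (cmod c)\<^sup>2 * (norm2 \<xi>)\<^sup>2"
    by (rule mult_left_mono[OF ell2_fin[OF assms S]]) simp
  finally show "(\<Sum>h\<in>S. (cmod (c * \<xi> h))\<^sup>2) \<le> (cmod c * norm2 \<xi>)\<^sup>2"
    by (simp add: power_mult_distrib)
qed

lemma ell2_sum:
  assumes "finite F" "\<And>g. g \<in> F \<Longrightarrow> v g \<in> ell2"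
  shows "(\<lambda>h. \<Sum>g\<in>F. v g h) \<in> ell2 \<and> norm2 (\<lambda>h. \<Sum>g\<in>F. v g h) \<le> (\<Sum>g\<in>F. norm2 (v g))"
  using assms
proof (induction F rule: finite_induct)
  case empty
  then show ?case using zero_ell2 by auto
next
  case (insert x F)
  have IH: "(\<lambda>h. \<Sum>g\<in>F. v g h) \<in> ell2 \<and> norm2 (\<lambda>h. \<Sum>g\<in>F. v g h) \<le> (\<Sum>g\<in>F. norm2 (v g))"
    using insert by auto
  have "(\<lambda>h. \<Sum>g\<in>insert x F. v g h) \<in> ell2 \<and>
     norm2 (\<lambda>h. \<Sum>g\<in>insert x F. v g h) \<le> norm2 (v x) + norm2 (\<lambda>h. \<Sum>g\<in>F. v g h)"
    apply (rule ell2_tri)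
    using insert IH by (auto simp: norm_triangle_ineq)
  then show ?case using IH insert by auto
qed

lemma ell2_abs: "(\<lambda>h. complex_of_real (cmod (\<xi> h))) \<in> ell2 \<longleftrightarrow> \<xi> \<in> ell2"
  "norm2 (\<lambda>h. complex_of_real (cmod (\<xi> h))) = norm2 \<xi>"
  by (simp_all add: ell2_def norm2_def)


lemma Lam_bound:
  assumes "\<And>a b. cmod (\<sigma> a b) \<le> 1" "\<xi> \<in> ell2"
  shows "Lam \<sigma> g \<xi> \<in> ell2 \<and> norm2 (Lam \<sigma> g \<xi>) \<le> norm2 \<xi>"
proof (rule ell2_bound[OF norm2_nonneg])
  fix S :: "'a set" assume S: "finite S"
  have "(\<Sum>h\<in>S. (cmod (Lam \<sigma> g \<xi> h))\<^sup>2) \<le> (\<Sum>h\<in>S. (cmod (\<xi> (-g + h)))\<^sup>2)"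
  proof (rule sum_mono)
    fix h
    have "cmod (Lam \<sigma> g \<xi> h) \<le> cmod (\<xi> (-g + h))"
      unfolding Lam_def norm_mult using assms(1)[of g "-g+h"]
      by (simp add: mult_left_le_one_le)
    thus "(cmod (Lam \<sigma> g \<xi> h))\<^sup>2 \<le> (cmod (\<xi> (-g + h)))\<^sup>2" by (simp add: power_mono)
  qed
  also have "\<dots> = (\<Sum>k\<in>(\<lambda>h. -g + h) ` S. (cmod (\<xi> k))\<^sup>2)"
    by (subst sum.reindex) (auto simp: inj_on_def)
  also have "\<dots> \<le> (norm2 \<xi>)\<^sup>2" by (rule ell2_fin[OF assms(2)]) (simp add: S)
  finally show "(\<Sum>h\<in>S. (cmod (Lam \<sigma> g \<xi> h))\<^sup>2) \<le> (norm2 \<xi>)\<^sup>2" .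
qed

lemma Lam_comb_bound:
  assumes "\<And>a b. cmod (\<sigma> a b) \<le> 1" "fin_supp f"
  shows "op_bound (Lam_comb \<sigma> f) (\<Sum>g\<in>{g. f g \<noteq> 0}. cmod (f g))"
  unfolding op_bound_def
proof
  fix \<xi> :: "'a vec" assume xi: "\<xi> \<in> ell2"
  have fin: "finite {g. f g \<noteq> 0}" using assms(2) by (simp add: fin_supp_def)
  have v: "(\<lambda>h. f g * Lam \<sigma> g \<xi> h) \<in> ell2 \<and> norm2 (\<lambda>h. f g * Lam \<sigma> g \<xi> h) \<le> cmod (f g) * norm2 \<xi>" for g
  proof -
    have L: "Lam \<sigma> g \<xi> \<in> ell2 \<and> norm2 (Lam \<sigma> g \<xi>) \<le> norm2 \<xi>" by (rule Lam_bound[OF assms(1) xi])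
    have "(\<lambda>h. f g * Lam \<sigma> g \<xi> h) \<in> ell2 \<and> norm2 (\<lambda>h. f g * Lam \<sigma> g \<xi> h) \<le> cmod (f g) * norm2 (Lam \<sigma> g \<xi>)"
      by (rule ell2_scale) (use L in simp)
    moreover have "cmod (f g) * norm2 (Lam \<sigma> g \<xi>) \<le> cmod (f g) * norm2 \<xi>"
      using L by (simp add: mult_left_mono)
    ultimately show ?thesis by linarith
  qed
  have s: "(\<lambda>h. \<Sum>g\<in>{g. f g \<noteq> 0}. f g * Lam \<sigma> g \<xi> h) \<in> ell2 \<and>
    norm2 (\<lambda>h. \<Sum>g\<in>{g. f g \<noteq> 0}. f g * Lam \<sigma> g \<xi> h) \<le> (\<Sum>g\<in>{g. f g \<noteq> 0}. norm2 (\<lambda>h. f g * Lam \<sigma> g \<xi> h))"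
    by (rule ell2_sum[OF fin]) (use v in auto)
  have "(\<Sum>g\<in>{g. f g \<noteq> 0}. norm2 (\<lambda>h. f g * Lam \<sigma> g \<xi> h)) \<le> (\<Sum>g\<in>{g. f g \<noteq> 0}. cmod (f g) * norm2 \<xi>)"
    by (rule sum_mono) (use v in auto)
  also have "\<dots> = (\<Sum>g\<in>{g. f g \<noteq> 0}. cmod (f g)) * norm2 \<xi>" by (simp add: sum_distrib_right)
  finally show "Lam_comb \<sigma> f \<xi> \<in> ell2 \<and> norm2 (Lam_comb \<sigma> f \<xi>) \<le> (\<Sum>g\<in>{g. f g \<noteq> 0}. cmod (f g)) * norm2 \<xi>"
    using s unfolding Lam_comb_def by auto
qed

lemma opnorm_bound:
  assumes "op_bound T c" "0 \<le> c"
  shows "op_bound T (opnorm T) \<and> 0 \<le> opnorm T \<and> opnorm T \<le> c"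
proof -
  let ?A = "{c. 0 \<le> c \<and> op_bound T c}"
  have ne: "?A \<noteq> {}" using assms by auto
  have bb: "bdd_below ?A" by (rule bdd_belowI[where m=0]) auto
  have le: "opnorm T \<le> c" unfolding opnorm_def by (rule cInf_lower[OF _ bb]) (use assms in auto)
  have ge: "0 \<le> opnorm T" unfolding opnorm_def by (rule cInf_greatest[OF ne]) auto
  have "op_bound T (opnorm T)"
    unfolding op_bound_def
  proof
    fix \<xi> :: "'a vec" assume xi: "\<xi> \<in> ell2"
    have T: "T \<xi> \<in> ell2" using assms(1) xi by (simp add: op_bound_def)
    have b: "norm2 (T \<xi>) \<le> d * norm2 \<xi>" if "d \<in> ?A" for d using that xi by (auto simp: op_bound_def)
    show "T \<xi> \<in> ell2 \<and> norm2 (T \<xi>) \<le> opnorm T * norm2 \<xi>"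
    proof (cases "norm2 \<xi> = 0")
      case True
      then show ?thesis using T b[of c] assms by auto
    next
      case False
      hence p: "0 < norm2 \<xi>" using norm2_nonneg[of \<xi>] by linarith
      have "norm2 (T \<xi>) / norm2 \<xi> \<le> opnorm T" unfolding opnorm_def
        by (rule cInf_greatest[OF ne]) (use b p in \<open>auto simp: divide_le_eq\<close>)
      then show ?thesis using T p by (simp add: divide_le_eq)
    qed
  qed
  with le ge show ?thesis by auto
qed

lemma opnorm_le:
  assumes "\<And>\<epsilon>. 0 < \<epsilon> \<Longrightarrow> op_bound T (B + \<epsilon>)" "0 \<le> B"
  shows "opnorm T \<le> B"
proof (rule field_le_epsilon)
  fix e :: real assume "0 < e"
  thus "opnorm T \<le> B + e" using opnorm_bound[OF assms(1)[of e]] assms(2) by auto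
qed

lemma ell2_minus_bound:
  assumes "\<xi> \<in> ell2" "\<zeta> \<in> ell2"
  shows "(\<lambda>h. \<xi> h + \<zeta> h) \<in> ell2 \<and> norm2 (\<lambda>h. \<xi> h + \<zeta> h) \<le> norm2 \<xi> + norm2 \<zeta>"
  by (rule ell2_tri[OF assms]) (simp add: norm_triangle_ineq)

lemma Cred_bounded:
  assumes "normalized_2cocycle \<sigma>" "x \<in> Cred \<sigma>"
  shows "\<exists>c\<ge>0. op_bound x c"
proof -
  have s1: "cmod (\<sigma> a b) \<le> 1" for a b using assms(1) by (simp add: normalized_2cocycle_def)
  have "\<forall>\<epsilon>>0. \<exists>f. fin_supp f \<and> op_bound (op_diff x (Lam_comb \<sigma> f)) \<epsilon>"
    using assms(2) by (simp add: Cred_def)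
  then obtain f where f: "fin_supp f" "op_bound (op_diff x (Lam_comb \<sigma> f)) 1"
    using zero_less_one by blast
  let ?c = "\<Sum>g\<in>{g. f g \<noteq> 0}. cmod (f g)"
  have L: "op_bound (Lam_comb \<sigma> f) ?c" by (rule Lam_comb_bound[OF s1 f(1)])
  have "op_bound x (1 + ?c)" unfolding op_bound_def
  proof
    fix \<xi> :: "'a vec" assume xi: "\<xi> \<in> ell2"
    have d: "op_diff x (Lam_comb \<sigma> f) \<xi> \<in> ell2 \<and> norm2 (op_diff x (Lam_comb \<sigma> f) \<xi>) \<le> 1 * norm2 \<xi>"
      using f(2) xi by (simp add: op_bound_def)
    have l: "Lam_comb \<sigma> f \<xi> \<in> ell2 \<and> norm2 (Lam_comb \<sigma> f \<xi>) \<le> ?c * norm2 \<xi>"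
      using L xi by (simp add: op_bound_def)
    have e: "x \<xi> = (\<lambda>h. op_diff x (Lam_comb \<sigma> f) \<xi> h + Lam_comb \<sigma> f \<xi> h)"
      by (simp add: op_diff_def)
    show "x \<xi> \<in> ell2 \<and> norm2 (x \<xi>) \<le> (1 + ?c) * norm2 \<xi>"
      using ell2_minus_bound[OF conjunct1[OF d] conjunct1[OF l]] d l unfolding e[symmetric]
      by (simp add: distrib_right)
  qed
  moreover have "0 \<le> 1 + ?c" by (simp add: sum_nonneg add_nonneg_nonneg)
  ultimately show ?thesis by blast
qed

lemma delta_ell2: "(\<lambda>h::'a::group_add. if h = 0 then 1 else (0::complex)) \<in> ell2 \<and>
   norm2 (\<lambda>h::'a. if h = 0 then 1 else (0::complex)) \<le> 1"
proof (rule ell2_bound)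
  fix S :: "'a set" assume S: "finite S"
  have "(\<Sum>h\<in>S. (cmod (if h = 0 then 1 else (0::complex)))\<^sup>2) = (\<Sum>h\<in>S. if h = 0 then 1 else 0)"
    by (rule sum.cong) auto
  also have "\<dots> \<le> 1" using S by (simp add: sum.If_cases)
  finally show "(\<Sum>h\<in>S. (cmod (if h = 0 then 1 else (0::complex)))\<^sup>2) \<le> 1\<^sup>2" by simp
qed simp

lemma hat_ell2:
  assumes "normalized_2cocycle \<sigma>" "x \<in> Cred \<sigma>"
  shows "hat x \<in> ell2 \<and> norm2 (hat x) \<le> opnorm x \<and> 0 \<le> opnorm x"
proof -
  obtain c where "0 \<le> c" "op_bound x c" using Cred_bounded[OF assms] by blast
  from opnorm_bound[OF this(2,1)] have b: "op_bound x (opnorm x)" "0 \<le> opnorm x" by auto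
  from b(1) delta_ell2 have "hat x \<in> ell2 \<and> norm2 (hat x) \<le> opnorm x * norm2 (\<lambda>h::'a. if h = 0 then 1 else (0::complex))"
    unfolding hat_def op_bound_def by blast
  moreover have "opnorm x * norm2 (\<lambda>h::'a. if h = 0 then 1 else (0::complex)) \<le> opnorm x"
    by (rule mult_left_le) (use delta_ell2 b(2) in auto)
  ultimately show ?thesis using b(2) by linarith
qed

lemma decay_const:
  assumes "kappa_decaying \<kappa>"
  shows "decay_bound \<kappa> (decay_constant \<kappa>) \<and> 0 \<le> decay_constant \<kappa>"
proof -
  let ?A = "{C. 0 \<le> C \<and> decay_bound \<kappa> C}"
  obtain C0 where C0: "decay_bound \<kappa> C0" using assms by (auto simp: kappa_decaying_def)
  have nk: "0 \<le> norm2_kappa \<kappa> f" for f by (simp add: norm2_kappa_def norm2_nonneg)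
  have "decay_bound \<kappa> (max C0 0)" unfolding decay_bound_def
  proof (intro allI impI)
    fix f :: "'a \<Rightarrow> complex" assume "fin_supp f"
    hence "opnorm (pi_lambda f) \<le> C0 * norm2_kappa \<kappa> f" using C0 by (simp add: decay_bound_def)
    also have "\<dots> \<le> max C0 0 * norm2_kappa \<kappa> f" by (rule mult_right_mono[OF max.cobounded1 nk])
    finally show "opnorm (pi_lambda f) \<le> max C0 0 * norm2_kappa \<kappa> f" .
  qed
  hence "max C0 0 \<in> ?A" by simp
  hence ne: "?A \<noteq> {}" by blast
  have ge: "0 \<le> decay_constant \<kappa>" unfolding decay_constant_def by (rule cInf_greatest[OF ne]) auto
  have "decay_bound \<kappa> (decay_constant \<kappa>)" unfolding decay_bound_def
  proof (intro allI impI)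
    fix f :: "'a \<Rightarrow> complex" assume f: "fin_supp f"
    show "opnorm (pi_lambda f) \<le> decay_constant \<kappa> * norm2_kappa \<kappa> f"
    proof (cases "norm2_kappa \<kappa> f = 0")
      case True
      then show ?thesis using C0 f by (auto simp: decay_bound_def)
    next
      case False
      hence p: "0 < norm2_kappa \<kappa> f" using nk[of f] by linarith
      have "opnorm (pi_lambda f) / norm2_kappa \<kappa> f \<le> decay_constant \<kappa>" unfolding decay_constant_def
        by (rule cInf_greatest[OF ne]) (use f p in \<open>auto simp: divide_le_eq decay_bound_def\<close>)
      then show ?thesis using p by (simp add: divide_le_eq)
    qed
  qed
  with ge show ?thesis by auto
qed

lemma fatou:
  fixes v :: "'i \<Rightarrow> 'a vec" and \<eta> :: "'a vec"
  assumes "F \<noteq> bot" "\<And>h. ((\<lambda>i. v i h) \<longlongrightarrow> \<eta> h) F"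
    "eventually (\<lambda>i. v i \<in> ell2 \<and> norm2 (v i) \<le> B) F" "0 \<le> B"
  shows "\<eta> \<in> ell2 \<and> norm2 \<eta> \<le> B"
proof (rule ell2_bound[OF assms(4)])
  fix S :: "'a set" assume S: "finite S"
  have t: "((\<lambda>i. \<Sum>h\<in>S. (cmod (v i h))\<^sup>2) \<longlongrightarrow> (\<Sum>h\<in>S. (cmod (\<eta> h))\<^sup>2)) F"
    by (intro tendsto_intros assms(2))
  have e: "eventually (\<lambda>i. (\<Sum>h\<in>S. (cmod (v i h))\<^sup>2) \<le> B\<^sup>2) F"
    using assms(3)
  proof (rule eventually_mono)
    fix i assume i: "v i \<in> ell2 \<and> norm2 (v i) \<le> B"
    have "(\<Sum>h\<in>S. (cmod (v i h))\<^sup>2) \<le> (norm2 (v i))\<^sup>2" using ell2_fin[OF conjunct1[OF i] S] .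
    also have "\<dots> \<le> B\<^sup>2" using i by (simp add: power_mono norm2_nonneg)
    finally show "(\<Sum>h\<in>S. (cmod (v i h))\<^sup>2) \<le> B\<^sup>2" .
  qed
  show "(\<Sum>h\<in>S. (cmod (\<eta> h))\<^sup>2) \<le> B\<^sup>2" by (rule tendsto_upperbound[OF t e assms(1)])
qed

lemma tail_small:
  assumes "v \<in> ell2" "0 < \<delta>"
  shows "\<exists>F0. finite F0 \<and> norm2 (\<lambda>g. if g \<in> - F0 then v g else 0) \<le> \<delta>"
proof -
  let ?f = "\<lambda>g. (cmod (v g))\<^sup>2"
  have s: "?f summable_on UNIV" using assms(1) by (simp add: ell2_def)
  hence "(sum ?f \<longlongrightarrow> infsum ?f UNIV) (finite_subsets_at_top UNIV)"
    using has_sum_infsum has_sum_def by blast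
  hence "eventually (\<lambda>F. dist (sum ?f F) (infsum ?f UNIV) < \<delta>\<^sup>2) (finite_subsets_at_top UNIV)"
    using assms(2) by (simp add: tendsto_iff)
  then obtain F0 where F0: "finite F0" "dist (sum ?f F0) (infsum ?f UNIV) < \<delta>\<^sup>2"
    unfolding eventually_finite_subsets_at_top by auto
  have "norm2 (\<lambda>g. if g \<in> - F0 then v g else 0) \<le> \<delta>"
  proof (rule conjunct2[OF ell2_bound])
    show "0 \<le> \<delta>" using assms by simp
    fix S :: "'a set" assume S: "finite S"
    have "(\<Sum>h\<in>S. (cmod (if h \<in> - F0 then v h else 0))\<^sup>2) = (\<Sum>h\<in>S \<inter> - F0. ?f h)"
      using S by (intro sum.mono_neutral_cong_right) auto
    also have "\<dots> = sum ?f ((S \<inter> - F0) \<union> F0) - sum ?f F0"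
      using S F0 by (subst sum.union_disjoint) auto
    also have "sum ?f ((S \<inter> - F0) \<union> F0) \<le> infsum ?f UNIV"
      by (rule finite_sum_le_infsum[OF s]) (use S F0 in auto)
    hence "sum ?f ((S \<inter> - F0) \<union> F0) - sum ?f F0 \<le> infsum ?f UNIV - sum ?f F0" by simp
    also have "\<dots> < \<delta>\<^sup>2" using F0(2) by (simp add: dist_real_def)
    finally show "(\<Sum>h\<in>S. (cmod (if h \<in> - F0 then v h else 0))\<^sup>2) \<le> \<delta>\<^sup>2" by simp
  qed
  with F0 show ?thesis by blast
qed


context
  fixes \<kappa> :: "'g::group_add \<Rightarrow> real" and \<psi> :: "'g \<Rightarrow> complex"
    and \<sigma> :: "'g \<Rightarrow> 'g \<Rightarrow> complex" and C K :: real and x :: "'g oper"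
  assumes kpos: "\<forall>g. 1 \<le> \<kappa> g" and dec: "decay_bound \<kappa> C" and C0: "0 \<le> C"
    and Kb: "\<forall>g. cmod (\<psi> g) * \<kappa> g \<le> K" and K0: "0 \<le> K"
    and coc: "\<forall>a b. cmod (\<sigma> a b) = 1" and hx: "hat x \<in> ell2"
begin

lemma restr_ell2:
  assumes "A \<subseteq> B"
  shows "(\<lambda>g. if g \<in> A then hat x g else 0) \<in> ell2 \<and>
    norm2 (\<lambda>g. if g \<in> A then hat x g else 0) \<le> norm2 (\<lambda>g. if g \<in> B then hat x g else 0)"
proof -
  have b: "(\<lambda>g. if g \<in> B then hat x g else 0) \<in> ell2"
    using ell2_dom[OF hx, of "\<lambda>g. if g \<in> B then hat x g else 0"] by simp
  show ?thesis by (rule ell2_dom[OF b]) (use assms in auto)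
qed

lemma key:
  assumes S: "finite S" "S \<subseteq> A" and xi: "\<xi> \<in> ell2"
  shows "mcf_partial \<sigma> \<psi> x S \<xi> \<in> ell2 \<and>
      norm2 (mcf_partial \<sigma> \<psi> x S \<xi>) \<le> C * K * norm2 (\<lambda>g. if g \<in> A then hat x g else 0) * norm2 \<xi>"
    and "(\<Sum>g\<in>S. cmod (\<psi> g * hat x g * Lam \<sigma> g \<xi> h)) \<le> C * K * norm2 (\<lambda>g. if g \<in> A then hat x g else 0) * norm2 \<xi>"
proof -
  let ?rA = "\<lambda>g. if g \<in> A then hat x g else 0"
  define fS where "fS = (\<lambda>g. if g \<in> S then complex_of_real (cmod (\<psi> g * hat x g)) else 0)"
  define a\<xi> where "a\<xi> = (\<lambda>k. complex_of_real (cmod (\<xi> k)))"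
  have fin: "fin_supp fS" unfolding fin_supp_def fS_def
    by (rule finite_subset[OF _ S(1)]) auto
  have cm: "cmod (\<psi> g * hat x g * Lam \<sigma> g \<xi> h) = cmod (\<psi> g * hat x g) * cmod (\<xi> (-g + h))" for g h
    using coc by (simp add: Lam_def norm_mult)
  have pi_eq: "pi_lambda fS a\<xi> h = complex_of_real (\<Sum>g\<in>S. cmod (\<psi> g * hat x g * Lam \<sigma> g \<xi> h))" for h
  proof -
    have "pi_lambda fS a\<xi> h = (\<Sum>g\<in>{g. fS g \<noteq> 0}. fS g * (1 * a\<xi> (-g + h)))"
      by (simp add: pi_lambda_def Lam_comb_def Lam_def)
    also have "\<dots> = (\<Sum>g\<in>S. fS g * (1 * a\<xi> (-g + h)))"
      by (rule sum.mono_neutral_cong_left[OF S(1)]) (auto simp: fS_def)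
    also have "\<dots> = (\<Sum>g\<in>S. complex_of_real (cmod (\<psi> g * hat x g * Lam \<sigma> g \<xi> h)))"
      by (rule sum.cong) (auto simp: fS_def a\<xi>_def cm)
    finally show ?thesis by simp
  qed
  have s1: "cmod ((\<lambda>_ _. 1::complex) a b) \<le> 1" for a b :: 'g by simp
  have pb: "op_bound (pi_lambda fS) (opnorm (pi_lambda fS))"
    using opnorm_bound[OF Lam_comb_bound[OF s1 fin]] unfolding pi_lambda_def by (simp add: sum_nonneg)
  have opn: "opnorm (pi_lambda fS) \<le> C * norm2_kappa \<kappa> fS" using dec fin by (simp add: decay_bound_def)
  have rA: "?rA \<in> ell2" using restr_ell2[of A A] by simp
  have KrA: "(\<lambda>g. complex_of_real K * ?rA g) \<in> ell2 \<and> norm2 (\<lambda>g. complex_of_real K * ?rA g) \<le> K * norm2 ?rA"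
    using ell2_scale[OF rA, of "complex_of_real K"] K0 by simp
  have nk: "norm2_kappa \<kappa> fS \<le> K * norm2 ?rA"
  proof -
    have "norm2 (\<lambda>g. fS g * complex_of_real (\<kappa> g)) \<le> norm2 (\<lambda>g. complex_of_real K * ?rA g)"
    proof (rule conjunct2[OF ell2_dom[OF conjunct1[OF KrA]]])
      fix g
      show "cmod (fS g * complex_of_real (\<kappa> g)) \<le> cmod (complex_of_real K * ?rA g)"
      proof (cases "g \<in> S")
        case True
        hence "g \<in> A" using S by auto
        have k1: "1 \<le> \<kappa> g" using kpos by blast
        hence k: "0 \<le> \<kappa> g" by linarith
        have "cmod (fS g * complex_of_real (\<kappa> g)) = (cmod (\<psi> g) * \<kappa> g) * cmod (hat x g)"
          using True k by (simp add: fS_def norm_mult)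
        also have "\<dots> \<le> K * cmod (hat x g)" using Kb by (simp add: mult_right_mono)
        finally show ?thesis using \<open>g \<in> A\<close> K0 by (simp add: norm_mult)
      qed (simp add: fS_def)
    qed
    thus ?thesis using KrA unfolding norm2_kappa_def by linarith
  qed
  have axi: "a\<xi> \<in> ell2" "norm2 a\<xi> = norm2 \<xi>" using xi ell2_abs unfolding a\<xi>_def by auto
  have pia: "pi_lambda fS a\<xi> \<in> ell2" "norm2 (pi_lambda fS a\<xi>) \<le> opnorm (pi_lambda fS) * norm2 \<xi>"
    using pb axi unfolding op_bound_def by auto
  have "opnorm (pi_lambda fS) * norm2 \<xi> \<le> C * K * norm2 ?rA * norm2 \<xi>"
  proof (rule mult_right_mono[OF _ norm2_nonneg])
    show "opnorm (pi_lambda fS) \<le> C * K * norm2 ?rA"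
      using opn mult_left_mono[OF nk C0] by (simp add: mult.assoc)
  qed
  hence bnd: "norm2 (pi_lambda fS a\<xi>) \<le> C * K * norm2 ?rA * norm2 \<xi>" using pia by linarith
  have pw: "cmod (mcf_partial \<sigma> \<psi> x S \<xi> h) \<le> cmod (pi_lambda fS a\<xi> h)" for h
  proof -
    have "cmod (mcf_partial \<sigma> \<psi> x S \<xi> h) \<le> (\<Sum>g\<in>S. cmod (\<psi> g * hat x g * Lam \<sigma> g \<xi> h))"
      unfolding mcf_partial_def by (rule norm_sum)
    also have "\<dots> = cmod (pi_lambda fS a\<xi> h)" by (simp only: pi_eq norm_of_real) (rule abs_of_nonneg[symmetric], rule sum_nonneg, simp)
    finally show ?thesis .
  qed
  show "mcf_partial \<sigma> \<psi> x S \<xi> \<in> ell2 \<and>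
      norm2 (mcf_partial \<sigma> \<psi> x S \<xi>) \<le> C * K * norm2 ?rA * norm2 \<xi>"
    using ell2_dom[OF pia(1) pw] bnd by linarith
  have "(\<Sum>g\<in>S. cmod (\<psi> g * hat x g * Lam \<sigma> g \<xi> h)) = cmod (pi_lambda fS a\<xi> h)"
    by (simp only: pi_eq norm_of_real) (rule abs_of_nonneg[symmetric], rule sum_nonneg, simp)
  also have "\<dots> \<le> norm2 (pi_lambda fS a\<xi>)" by (rule cmod_le_norm2[OF pia(1)])
  finally show "(\<Sum>g\<in>S. cmod (\<psi> g * hat x g * Lam \<sigma> g \<xi> h)) \<le> C * K * norm2 ?rA * norm2 \<xi>"
    using bnd by linarith
qed


lemma summ:
  assumes xi: "\<xi> \<in> ell2"
  shows "(\<lambda>g. \<psi> g * hat x g * Lam \<sigma> g \<xi> h) summable_on B"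
proof -
  have "(\<lambda>g. norm (\<psi> g * hat x g * Lam \<sigma> g \<xi> h)) summable_on UNIV"
  proof (rule nonneg_bdd_above_summable_on)
    show "bdd_above (sum (\<lambda>g. norm (\<psi> g * hat x g * Lam \<sigma> g \<xi> h)) ` {F. F \<subseteq> UNIV \<and> finite F})"
      using key(2)[OF _ _ xi, of _ UNIV h]
      by (intro bdd_aboveI[where M="C * K * norm2 (\<lambda>g. if g \<in> UNIV then hat x g else 0) * norm2 \<xi>"]) auto
  qed simp
  hence "(\<lambda>g. \<psi> g * hat x g * Lam \<sigma> g \<xi> h) summable_on UNIV" by (rule abs_summable_summable)
  thus ?thesis by (rule summable_on_subset_banach) simp
qed

definition Yop :: "'g oper" where
  "Yop = (\<lambda>\<xi> h. \<Sum>\<^sub>\<infinity>g. \<psi> g * hat x g * Lam \<sigma> g \<xi> h)"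

lemma tail:
  assumes F: "finite F" "F0 \<subseteq> F" and xi: "\<xi> \<in> ell2"
  shows "op_diff (mcf_partial \<sigma> \<psi> x F) Yop \<xi> \<in> ell2 \<and>
    norm2 (op_diff (mcf_partial \<sigma> \<psi> x F) Yop \<xi>) \<le> C * K * norm2 (\<lambda>g. if g \<in> - F0 then hat x g else 0) * norm2 \<xi>"
proof -
  let ?f = "\<lambda>h g. \<psi> g * hat x g * Lam \<sigma> g \<xi> h"
  define t where "t = (\<lambda>h. infsum (?f h) (- F))"
  have split: "op_diff (mcf_partial \<sigma> \<psi> x F) Yop \<xi> h = - t h" for h
  proof -
    have "infsum (?f h) (F \<union> - F) = infsum (?f h) F + infsum (?f h) (- F)"
      by (rule infsum_Un_disjoint) (auto intro: summ[OF xi])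
    hence "Yop \<xi> h = sum (?f h) F + t h" using F(1) by (simp add: Yop_def t_def)
    thus ?thesis by (simp add: op_diff_def mcf_partial_def)
  qed
  have nn: "0 \<le> C * K * norm2 (\<lambda>g. if g \<in> - F0 then hat x g else 0) * norm2 \<xi>"
    using C0 K0 by (simp add: norm2_nonneg)
  have tt: "t \<in> ell2 \<and> norm2 t \<le> C * K * norm2 (\<lambda>g. if g \<in> - F0 then hat x g else 0) * norm2 \<xi>"
  proof (rule fatou[where F="finite_subsets_at_top (- F)" and v="\<lambda>S. mcf_partial \<sigma> \<psi> x S \<xi>"])
    show "finite_subsets_at_top (- F) \<noteq> bot" by (rule finite_subsets_at_top_neq_bot)
    fix h
    have "(?f h has_sum t h) (- F)" unfolding t_def by (rule has_sum_infsum[OF summ[OF xi]])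
    thus "((\<lambda>S. mcf_partial \<sigma> \<psi> x S \<xi> h) \<longlongrightarrow> t h) (finite_subsets_at_top (- F))"
      by (simp add: has_sum_def mcf_partial_def)
  next
    show "\<forall>\<^sub>F S in finite_subsets_at_top (- F). mcf_partial \<sigma> \<psi> x S \<xi> \<in> ell2 \<and>
      norm2 (mcf_partial \<sigma> \<psi> x S \<xi>) \<le> C * K * norm2 (\<lambda>g. if g \<in> - F0 then hat x g else 0) * norm2 \<xi>"
    proof (rule eventually_finite_subsets_at_top_weakI)
      fix S assume "finite S" "S \<subseteq> - F"
      moreover have "S \<subseteq> - F0" using \<open>S \<subseteq> - F\<close> F(2) by auto
      ultimately show "mcf_partial \<sigma> \<psi> x S \<xi> \<in> ell2 \<and>
        norm2 (mcf_partial \<sigma> \<psi> x S \<xi>) \<le> C * K * norm2 (\<lambda>g. if g \<in> - F0 then hat x g else 0) * norm2 \<xi>"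
        using key(1)[OF _ _ xi] by blast
    qed
  qed (rule nn)
  have "op_diff (mcf_partial \<sigma> \<psi> x F) Yop \<xi> \<in> ell2 \<and> norm2 (op_diff (mcf_partial \<sigma> \<psi> x F) Yop \<xi>) \<le> norm2 t"
    by (rule ell2_dom[OF conjunct1[OF tt]]) (simp add: split)
  with tt show ?thesis by linarith
qed

lemma mcf_conv: "mcf_converges_to \<sigma> \<psi> x Yop"
  unfolding mcf_converges_to_def
proof (intro allI impI)
  fix \<epsilon> :: real assume e: "0 < \<epsilon>"
  let ?M = "C * K"
  have M0: "0 \<le> ?M" using C0 K0 by simp
  have d: "0 < \<epsilon> / (?M + 1)" using e M0 by simp
  obtain F0 where F0: "finite F0" "norm2 (\<lambda>g. if g \<in> - F0 then hat x g else 0) \<le> \<epsilon> / (?M + 1)"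
    using tail_small[OF hx d] by blast
  have Mb: "?M * norm2 (\<lambda>g. if g \<in> - F0 then hat x g else 0) \<le> \<epsilon>"
  proof -
    have "?M * norm2 (\<lambda>g. if g \<in> - F0 then hat x g else 0) \<le> ?M * (\<epsilon> / (?M + 1))"
      by (rule mult_left_mono[OF F0(2) M0])
    also have "\<dots> \<le> \<epsilon>" using M0 e by (simp add: field_simps)
    finally show ?thesis .
  qed
  show "\<exists>F0. finite F0 \<and> (\<forall>F. finite F \<and> F0 \<subseteq> F \<longrightarrow> op_bound (op_diff (mcf_partial \<sigma> \<psi> x F) Yop) \<epsilon>)"
  proof (intro exI conjI allI impI)
    show "finite F0" by (rule F0(1))
    fix F assume F: "finite F \<and> F0 \<subseteq> F"
    show "op_bound (op_diff (mcf_partial \<sigma> \<psi> x F) Yop) \<epsilon>" unfolding op_bound_def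
    proof
      fix \<xi> :: "'g vec" assume xi: "\<xi> \<in> ell2"
      note T = tail[OF conjunct1[OF F] conjunct2[OF F] xi]
      have "?M * norm2 (\<lambda>g. if g \<in> - F0 then hat x g else 0) * norm2 \<xi> \<le> \<epsilon> * norm2 \<xi>"
        by (rule mult_right_mono[OF Mb norm2_nonneg])
      with T show "op_diff (mcf_partial \<sigma> \<psi> x F) Yop \<xi> \<in> ell2 \<and>
          norm2 (op_diff (mcf_partial \<sigma> \<psi> x F) Yop \<xi>) \<le> \<epsilon> * norm2 \<xi>" by linarith
    qed
  qed
qed

lemma any_limit_bound:
  assumes "mcf_converges_to \<sigma> \<psi> x y"
  shows "opnorm y \<le> C * K * norm2 (hat x)"
proof (rule opnorm_le)
  show "0 \<le> C * K * norm2 (hat x)" using C0 K0 by (simp add: norm2_nonneg)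
  fix \<epsilon> :: real assume e: "0 < \<epsilon>"
  obtain F0 where F0: "finite F0" "op_bound (op_diff (mcf_partial \<sigma> \<psi> x F0) y) \<epsilon>"
    using assms e unfolding mcf_converges_to_def by blast
  show "op_bound y (C * K * norm2 (hat x) + \<epsilon>)" unfolding op_bound_def
  proof
    fix \<xi> :: "'g vec" assume xi: "\<xi> \<in> ell2"
    have P: "mcf_partial \<sigma> \<psi> x F0 \<xi> \<in> ell2 \<and>
      norm2 (mcf_partial \<sigma> \<psi> x F0 \<xi>) \<le> C * K * norm2 (\<lambda>g. if g \<in> UNIV then hat x g else 0) * norm2 \<xi>"
      using key(1)[OF F0(1) _ xi, of UNIV] by simp
    have D: "op_diff (mcf_partial \<sigma> \<psi> x F0) y \<xi> \<in> ell2 \<and>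
        norm2 (op_diff (mcf_partial \<sigma> \<psi> x F0) y \<xi>) \<le> \<epsilon> * norm2 \<xi>"
      using F0(2) xi by (simp add: op_bound_def)
    have "y \<xi> \<in> ell2 \<and> norm2 (y \<xi>) \<le> norm2 (mcf_partial \<sigma> \<psi> x F0 \<xi>) + norm2 (op_diff (mcf_partial \<sigma> \<psi> x F0) y \<xi>)"
    proof (rule ell2_tri[OF conjunct1[OF P] conjunct1[OF D]])
      fix h
      have "y \<xi> h = mcf_partial \<sigma> \<psi> x F0 \<xi> h - op_diff (mcf_partial \<sigma> \<psi> x F0) y \<xi> h"
        by (simp add: op_diff_def)
      thus "cmod (y \<xi> h) \<le> cmod (mcf_partial \<sigma> \<psi> x F0 \<xi> h) + cmod (op_diff (mcf_partial \<sigma> \<psi> x F0) y \<xi> h)"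
        by (simp add: norm_triangle_ineq4)
    qed
    thus "y \<xi> \<in> ell2 \<and> norm2 (y \<xi>) \<le> (C * K * norm2 (hat x) + \<epsilon>) * norm2 \<xi>"
      using P D by (simp add: distrib_right)
  qed
qed

end

theorem proposition4p8:
  fixes \<kappa> :: "'g::group_add \<Rightarrow> real" and \<psi> :: "'g \<Rightarrow> complex"
    and \<sigma> :: "'g \<Rightarrow> 'g \<Rightarrow> complex" and C K :: real
  assumes "\<forall>g. 1 \<le> \<kappa> g"
    and "kappa_decaying \<kappa>"
    and "C = decay_constant \<kappa>"
    and "bdd_above (range (\<lambda>g. cmod (\<psi> g) * \<kappa> g))"
    and "K = (SUP g. cmod (\<psi> g) * \<kappa> g)"
    and "normalized_2cocycle \<sigma>"
  shows "\<psi> \<in> MCF \<sigma> \<and> (\<forall>x\<in>Cred \<sigma>. opnorm (Mmult \<sigma> \<psi> x) \<le> C * K * opnorm x)"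
proof -
  have dec: "decay_bound \<kappa> C" and C0: "0 \<le> C" using decay_const[OF assms(2)] assms(3) by auto
  have Kb1: "cmod (\<psi> g) * \<kappa> g \<le> K" for g
    unfolding assms(5) by (rule cSUP_upper[OF UNIV_I assms(4)])
  hence Kb: "\<forall>g. cmod (\<psi> g) * \<kappa> g \<le> K" by blast
  have K0: "0 \<le> K"
  proof -
    have "1 \<le> \<kappa> 0" using assms(1) by simp
    hence "0 \<le> cmod (\<psi> 0) * \<kappa> 0" by simp
    thus ?thesis using Kb1[of 0] by linarith
  qed
  have coc: "\<forall>a b. cmod (\<sigma> a b) = 1" using assms(6) by (simp add: normalized_2cocycle_def)
  have A: "\<psi> \<in> MCF \<sigma>" unfolding MCF_def
  proof
    show "\<forall>x\<in>Cred \<sigma>. \<exists>y. mcf_converges_to \<sigma> \<psi> x y"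
    proof
      fix x assume x: "x \<in> Cred \<sigma>"
      have hx: "hat x \<in> ell2" using hat_ell2[OF assms(6) x] by simp
      show "\<exists>y. mcf_converges_to \<sigma> \<psi> x y"
        using mcf_conv[OF assms(1) dec C0 Kb K0 coc hx] by blast
    qed
  qed
  have B: "opnorm (Mmult \<sigma> \<psi> x) \<le> C * K * opnorm x" if x: "x \<in> Cred \<sigma>" for x
  proof -
    have hx: "hat x \<in> ell2" "norm2 (hat x) \<le> opnorm x" using hat_ell2[OF assms(6) x] by auto
    have ex: "\<exists>y. mcf_converges_to \<sigma> \<psi> x y"
      using mcf_conv[OF assms(1) dec C0 Kb K0 coc hx(1)] by blast
    have "mcf_converges_to \<sigma> \<psi> x (Mmult \<sigma> \<psi> x)" unfolding Mmult_def by (rule someI_ex[OF ex])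
    hence "opnorm (Mmult \<sigma> \<psi> x) \<le> C * K * norm2 (hat x)"
      by (rule any_limit_bound[OF assms(1) dec C0 Kb K0 coc hx(1)])
    also have "\<dots> \<le> C * K * opnorm x" by (rule mult_left_mono[OF hx(2)]) (use C0 K0 in simp)
    finally show ?thesis .
  qed
  from A B show ?thesis by blast
qed


end
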